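(* In an ado-semilattice $(S,\sqcup,\cap)$, for all $a,b,c,d\in S$: (1) if $d\lesssim a\cap b$ and $d\lesssim b\cap c$ then $d\lesssim a\cap c$; (2) if $d\lesssim a$, $d\lesssim b$ and $d\lesssim a\curlyvee b$ then $d\lesssim a\cap b$.
   Context: An o-semilattice is an algebra $(L,\cap,\sqcup)$ such that $(L,\cap)$ is a semilattice and, with $x\leq y$ iff $x=x\cap y$, for all $x,y,z$: (i) $x\leq x\sqcup y$; (ii) $(x\cap y)\sqcup(y\cap z)\leq y$; (iii) $x\sqcup y\leq x\sqcup(y\cap(x\sqcup y))$; (iv) $x\cap z\leq(x\cap y)\sqcup z$. It is distributive if $(a\cap d)\sqcup((b\cap d)\cap(c\cap d))=((a\cap d)\sqcup(b\cap d))\cap((a\cap d)\sqcup(c\cap d))$ for all $a,b,c,d$. An ado-semilattice is a distributive o-semilattice in which $\sqcup$ is associative. In an ado-semilattice, $x\lesssim y$ means $y\sqcup x=y$, and $a\curlyvee b$ is defined as $(a\sqcup b)\cap(b\sqcup a)$. *)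

theory Defs
  imports Main
begin

definition semilattice_op :: "('a \<Rightarrow> 'a \<Rightarrow> 'a) \<Rightarrow> bool" where
  "semilattice_op m \<longleftrightarrow>
     (\<forall>x y z. m (m x y) z = m x (m y z)) \<and>
     (\<forall>x y. m x y = m y x) \<and>
     (\<forall>x. m x x = x)"

definition sle :: "('a \<Rightarrow> 'a \<Rightarrow> 'a) \<Rightarrow> 'a \<Rightarrow> 'a \<Rightarrow> bool" where
  "sle m x y \<longleftrightarrow> x = m x y"

definition o_semilattice :: "('a \<Rightarrow> 'a \<Rightarrow> 'a) \<Rightarrow> ('a \<Rightarrow> 'a \<Rightarrow> 'a) \<Rightarrow> bool" where
  "o_semilattice m j \<longleftrightarrow> semilattice_op m \<and>
     (\<forall>x y. sle m x (j x y)) \<and>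
     (\<forall>x y z. sle m (j (m x y) (m y z)) y) \<and>
     (\<forall>x y. sle m (j x y) (j x (m y (j x y)))) \<and>
     (\<forall>x y z. sle m (m x z) (j (m x y) z))"

definition distributive_os :: "('a \<Rightarrow> 'a \<Rightarrow> 'a) \<Rightarrow> ('a \<Rightarrow> 'a \<Rightarrow> 'a) \<Rightarrow> bool" where
  "distributive_os m j \<longleftrightarrow> o_semilattice m j \<and>
     (\<forall>a b c d. j (m a d) (m (m b d) (m c d)) = m (j (m a d) (m b d)) (j (m a d) (m c d)))"

definition ado_semilattice :: "('a \<Rightarrow> 'a \<Rightarrow> 'a) \<Rightarrow> ('a \<Rightarrow> 'a \<Rightarrow> 'a) \<Rightarrow> bool" where
  "ado_semilattice m j \<longleftrightarrow> distributive_os m j \<and> (\<forall>x y z. j (j x y) z = j x (j y z))"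

definition lesssim :: "('a \<Rightarrow> 'a \<Rightarrow> 'a) \<Rightarrow> 'a \<Rightarrow> 'a \<Rightarrow> bool" where
  "lesssim j x y \<longleftrightarrow> j y x = y"

definition cvee :: "('a \<Rightarrow> 'a \<Rightarrow> 'a) \<Rightarrow> ('a \<Rightarrow> 'a \<Rightarrow> 'a) \<Rightarrow> 'a \<Rightarrow> 'a \<Rightarrow> 'a" where
  "cvee m j a b = m (j a b) (j b a)"

end

theory Submission
  imports Defs
begin

locale ado_ax =
  fixes m j :: "'a \<Rightarrow> 'a \<Rightarrow> 'a"
  assumes massoc: "m (m x y) z = m x (m y z)"
  and mcomm: "m x y = m y x"
  and midem: "m x x = x"
  and a1: "x = m x (j x y)"
  and a2: "j (m x y) (m y z) = m (j (m x y) (m y z)) y"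
  and a3: "j x y = m (j x y) (j x (m y (j x y)))"
  and a4: "m x z = m (m x z) (j (m x y) z)"
  and dist: "j (m a d) (m (m b d) (m c d)) = m (j (m a d) (m b d)) (j (m a d) (m c d))"
  and jassoc: "j (j x y) z = j x (j y z)"
begin

lemma antis: "x = m x y \<Longrightarrow> y = m y x \<Longrightarrow> x = y"
proof -
  assume 1: "x = m x y" and 2: "y = m y x"
  have "x = m x y" by (rule 1)
  also have "\<dots> = m y x" by (rule mcomm)
  also have "\<dots> = y" by (rule 2[symmetric])
  finally show ?thesis .
qed
lemma jidem: "j x x = x"
proof -
  have 1: "j (m x x) (m x x) = m (j (m x x) (m x x)) x" by (rule a2)
  have 2: "j x x = m (j x x) x" using 1 unfolding midem .
  show ?thesis using antis[OF 2 a1] .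
qed
lemma le1: assumes h: "x = m x y" shows "j x y = y"
proof -
  have "j (m x y) (m y y) = m (j (m x y) (m y y)) y" by (rule a2)
  hence 1: "j x y = m (j x y) y" unfolding h[symmetric] midem .
  have "m y y = m (m y y) (j (m y x) y)" by (rule a4)
  hence 2: "y = m y (j x y)" unfolding midem mcomm[of y x] h[symmetric] .
  show ?thesis using antis[OF 1 2] .
qed
lemma le2: assumes h: "x = m x y" shows "j y x = y"
proof -
  have "j (m y y) (m y x) = m (j (m y y) (m y x)) y" by (rule a2)
  hence 1: "j y x = m (j y x) y" unfolding midem mcomm[of y x] h[symmetric] .
  show ?thesis using antis[OF 1 a1] .
qed
lemma jle:
  assumes xb: "x = m x b" and yb: "y = m y b" shows "j x y = m (j x y) b"
proof -
  have "j (m x b) (m b y) = m (j (m x b) (m b y)) b" by (rule a2)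
  thus ?thesis unfolding mcomm[of b y] xb[symmetric] yb[symmetric] .
qed
lemma le_j:
  assumes xb: "x = m x b" and yb: "y = m y b" shows "y = m y (j x y)"
proof -
  have "m b y = m (m b y) (j (m b x) y)" by (rule a4)
  thus ?thesis unfolding mcomm[of b y] mcomm[of b x] xb[symmetric] yb[symmetric] .
qed
lemma comm:
  assumes xb: "x = m x b" and yb: "y = m y b" shows "j x y = j y x"
proof -
  have 1: "x = m x (j y x)" using le_j[OF yb xb] .
  have 2: "j x (j y x) = j y x" using le1[OF 1] .
  have 3: "j x (j y x) = j (j x y) x" by (simp add: jassoc)
  have 4: "j (j x y) x = j x y" using le2[OF a1] .
  have "j x y = j (j x y) x" by (rule 4[symmetric])
  also have "\<dots> = j x (j y x)" by (rule 3[symmetric])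
  also have "\<dots> = j y x" by (rule 2)
  finally show ?thesis .
qed
lemma letr: "x = m x y \<Longrightarrow> y = m y z \<Longrightarrow> x = m x z"
proof -
  assume 1: "x = m x y" and 2: "y = m y z"
  have "m x z = m (m x y) z" using 1 by (rule arg_cong[where f="\<lambda>t. m t z"])
  also have "\<dots> = m x (m y z)" by (rule massoc)
  also have "\<dots> = x" using 1[symmetric] 2[symmetric] by simp
  finally show ?thesis by (rule sym)
qed

lemma meet_le1: "m x y = m (m x y) x"
proof -
  have "m (m x y) x = m x (m y x)" by (rule massoc)
  also have "\<dots> = m x (m x y)" by (simp add: mcomm)
  also have "\<dots> = m (m x x) y" by (simp add: massoc)
  finally show ?thesis by (simp add: midem)
qed

lemma meet_le2: "m x y = m (m x y) y"
  by (simp add: massoc midem)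


lemma meet_both: "w = m w x \<Longrightarrow> w = m w y \<Longrightarrow> w = m w (m x y)"
proof -
  assume 1: "w = m w x" and 2: "w = m w y"
  have "m w (m x y) = m (m w x) y" by (simp add: massoc)
  also have "\<dots> = w" using 1[symmetric] 2[symmetric] by simp
  finally show ?thesis by simp
qed

lemma key:
  assumes xb: "x = m x b" and yb: "y = m y b" and xd: "j x d = x" and yd: "j y d = y"
  shows "j (m x y) d = m (j (m x y) d) y"
proof -
  define s where "s = j x y"
  define u where "u = j d y"
  define y' where "y' = m u s"
  define z where "z = m x y"
  have h1: "j x u = s"
  proof -
    have "j x u = j (j x d) y" unfolding u_def by (rule jassoc[symmetric])
    thus ?thesis unfolding xd s_def .
  qed
  have h2: "s = m s (j x y')"
  proof -
    have "j x u = m (j x u) (j x (m u (j x u)))" by (rule a3)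
    thus ?thesis unfolding h1 y'_def .
  qed
  have xs: "x = m x s" unfolding s_def by (rule a1)
  have y's: "y' = m y' s" unfolding y'_def using meet_le2 .
  have h3: "j x y' = m (j x y') s" using jle[OF xs y's] .
  have h3': "j x y' = s" using antis[OF h3 h2] .
  have ys: "y = m y s" unfolding s_def using le_j[OF xb yb] .
  have msy: "m s y = y" using ys[symmetric] by (simp add: mcomm)
  have yu: "j y u = y"
  proof -
    have "j y u = j (j y d) y" unfolding u_def by (rule jassoc[symmetric])
    thus ?thesis unfolding yd jidem .
  qed
  have h5: "y' = m y' y"
  proof -
    have "m s u = m (m s u) (j (m s y) u)" by (rule a4)
    hence "m s u = m (m s u) y" unfolding msy yu .
    thus ?thesis unfolding y'_def mcomm[of u s] .
  qed
  have y'b: "y' = m y' b" using letr[OF h5 yb] .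
  have zb: "z = m z b" unfolding z_def using letr[OF meet_le2 yb] .
  have h7: "j y' z = y"
  proof -
    have "j (m y' b) (m (m x b) (m y b)) = m (j (m y' b) (m x b)) (j (m y' b) (m y b))" by (rule dist)
    hence "j y' (m x y) = m (j y' x) (j y' y)" unfolding xb[symmetric] yb[symmetric] y'b[symmetric] .
    moreover have "j y' x = s" using comm[OF y'b xb] h3' by simp
    moreover have "j y' y = y" using le1[OF h5] .
    ultimately show ?thesis unfolding z_def using msy by simp
  qed
  have h8: "j z y' = y" using comm[OF zb y'b] h7 by simp
  have y'u: "y' = m y' u" unfolding y'_def using meet_le1 .
  have h9: "j z u = y"
  proof -
    have "j y u = j (j z y') u" using h8 by simp
    also have "\<dots> = j z (j y' u)" by (rule jassoc)
    also have "\<dots> = j z u" using le1[OF y'u] by simp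
    finally show ?thesis using yu by simp
  qed
  have hh: "j (j z d) y = y" using h9 unfolding u_def by (simp add: jassoc)
  have "j z d = m (j z d) (j (j z d) y)" by (rule a1)
  hence "j z d = m (j z d) y" unfolding hh .
  thus ?thesis unfolding z_def .
qed

lemma C:
  assumes xb: "x = m x b" and yb: "y = m y b" and xd: "j x d = x" and yd: "j y d = y"
  shows "j (m x y) d = m x y"
proof -
  have 1: "j (m x y) d = m (j (m x y) d) y" by (rule key[OF xb yb xd yd])
  have 2: "j (m y x) d = m (j (m y x) d) x" by (rule key[OF yb xb yd xd])
  have h2b: "j (m x y) d = m (j (m x y) d) x" using 2 unfolding mcomm[of y x] .
  have 3: "j (m x y) d = m (j (m x y) d) (m x y)" using meet_both[OF h2b 1] .
  have 4: "m x y = m (m x y) (j (m x y) d)" by (rule a1)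
  show ?thesis using antis[OF 3 4] .
qed

lemma trans_ls: "j y x = y \<Longrightarrow> j z y = z \<Longrightarrow> j z x = z"
proof -
  assume 1: "j y x = y" and 2: "j z y = z"
  have "j z x = j (j z y) x" using 2 by simp
  also have "\<dots> = j z (j y x)" by (rule jassoc)
  also have "\<dots> = z" using 1 2 by simp
  finally show ?thesis .
qed

lemma part1: "j (m a b) d = m a b \<Longrightarrow> j (m b c) d = m b c \<Longrightarrow> j (m a c) d = m a c"
proof -
  assume h1: "j (m a b) d = m a b" and h2: "j (m b c) d = m b c"
  have e: "j (m (m a b) (m b c)) d = m (m a b) (m b c)"
    using C[OF meet_le2[of a b] meet_le1[of b c] h1 h2] .
  have l: "m (m a b) (m b c) = m (m (m a b) (m b c)) (m a c)"
  proof (rule meet_both)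
    show "m (m a b) (m b c) = m (m (m a b) (m b c)) a"
      using letr[OF meet_le1[of "m a b" "m b c"] meet_le1[of a b]] .
    show "m (m a b) (m b c) = m (m (m a b) (m b c)) c"
      using letr[OF meet_le2[of "m a b" "m b c"] meet_le2[of b c]] .
  qed
  have "j (m a c) (m (m a b) (m b c)) = m a c" using le2[OF l] .
  thus ?thesis by (rule trans_ls[OF e])
qed

lemma part2:
  assumes da: "j a d = a" and db: "j b d = b" and du: "j (m (j a b) (j b a)) d = m (j a b) (j b a)"
  shows "j (m a b) d = m a b"
proof -
  define u where "u = m (j a b) (j b a)"
  have du': "j u d = u" using du u_def by simp
  have ua: "u = m u (j a b)" unfolding u_def by (rule meet_le1)
  have ub: "u = m u (j b a)" unfolding u_def by (rule meet_le2)
  have au: "j (m a u) d = m a u" using C[OF a1 ua da du'] .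
  have bu: "j (m b u) d = m b u" using C[OF a1 ub db du'] .
  have e: "j (m (m a u) (m b u)) d = m (m a u) (m b u)"
    using C[OF meet_le2[of a u] meet_le2[of b u] au bu] .
  have abu: "m a b = m (m a b) u" unfolding u_def
  proof (rule meet_both)
    show "m a b = m (m a b) (j a b)" using letr[OF meet_le1 a1] .
    show "m a b = m (m a b) (j b a)" using letr[OF meet_le2 a1] .
  qed
  have "m (m a u) (m b u) = m a (m u (m b u))" by (simp add: massoc)
  also have "\<dots> = m a (m b u)" by (simp add: mcomm[of u "m b u"] massoc midem)
  also have "\<dots> = m (m a b) u" by (simp add: massoc)
  also have "\<dots> = m a b" using abu[symmetric] by simp
  finally show ?thesis using e by simp
qed

end

lemma ado_to_ax:
  assumes "ado_semilattice meet join"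
  shows "ado_ax meet join"
proof -
  have S: "semilattice_op meet" and O1: "\<forall>x y. sle meet x (join x y)"
    and O2: "\<forall>x y z. sle meet (join (meet x y) (meet y z)) y"
    and O3: "\<forall>x y. sle meet (join x y) (join x (meet y (join x y)))"
    and O4: "\<forall>x y z. sle meet (meet x z) (join (meet x y) z)"
    and D: "\<forall>a b c d. join (meet a d) (meet (meet b d) (meet c d)) = meet (join (meet a d) (meet b d)) (join (meet a d) (meet c d))"
    and J: "\<forall>x y z. join (join x y) z = join x (join y z)"
    using assms unfolding ado_semilattice_def distributive_os_def o_semilattice_def by auto
  from S have S1: "\<forall>x y z. meet (meet x y) z = meet x (meet y z)" and S2: "\<forall>x y. meet x y = meet y x"
    and S3: "\<forall>x. meet x x = x" unfolding semilattice_op_def by auto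
  show ?thesis
  proof
    fix x y z show "meet (meet x y) z = meet x (meet y z)" using S1 by blast
  next fix x y show "meet x y = meet y x" using S2 by blast
  next fix x show "meet x x = x" using S3 by blast
  next fix x y show "x = meet x (join x y)" using O1 unfolding sle_def by blast
  next fix x y z show "join (meet x y) (meet y z) = meet (join (meet x y) (meet y z)) y" using O2 unfolding sle_def by blast
  next fix x y show "join x y = meet (join x y) (join x (meet y (join x y)))" using O3 unfolding sle_def by blast
  next fix x y z show "meet x z = meet (meet x z) (join (meet x y) z)" using O4 unfolding sle_def by blast
  next fix a b c d show "join (meet a d) (meet (meet b d) (meet c d)) = meet (join (meet a d) (meet b d)) (join (meet a d) (meet c d))" using D by blast
  next fix x y z show "join (join x y) z = join x (join y z)" using J by blast
  qed
qed

theorem lemma3p6: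
  fixes meet join :: "'a \<Rightarrow> 'a \<Rightarrow> 'a"
  assumes "ado_semilattice meet join"
  shows "(\<forall>a b c d. lesssim join d (meet a b) \<and> lesssim join d (meet b c)
           \<longrightarrow> lesssim join d (meet a c)) \<and>
         (\<forall>a b d. lesssim join d a \<and> lesssim join d b \<and> lesssim join d (cvee meet join a b)
           \<longrightarrow> lesssim join d (meet a b))"
proof -
  interpret ado_ax meet join by (rule ado_to_ax[OF assms])
  show ?thesis unfolding lesssim_def cvee_def
  proof (intro conjI allI impI)
    fix a b c d
    assume h: "join (meet a b) d = meet a b \<and> join (meet b c) d = meet b c"
    from h have h1: "join (meet a b) d = meet a b" by (rule conjunct1)
    from h have h2: "join (meet b c) d = meet b c" by (rule conjunct2)
    show "join (meet a c) d = meet a c" by (rule part1[OF h1 h2])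
  next
    fix a b d
    assume h: "join a d = a \<and> join b d = b \<and> join (meet (join a b) (join b a)) d = meet (join a b) (join b a)"
    from h have h1: "join a d = a" by (rule conjunct1)
    from h have h2: "join b d = b" by (blast dest: conjunct2 conjunct1)
    from h have h3: "join (meet (join a b) (join b a)) d = meet (join a b) (join b a)" by (blast dest: conjunct2)
    show "join (meet a b) d = meet a b" by (rule part2[OF h1 h2 h3])
  qed
qed

end
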